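(* Let $n\ge3$, let every qubit carry the Hamiltonian $H_i=|1\rangle\langle1|$, and let $s=[n]$. For $|\mathrm{GHZ}_n\rangle=\frac1{\sqrt2}(|0\rangle^{\otimes n}+|1\rangle^{\otimes n})$ and $|W_n\rangle=\frac1{\sqrt n}\sum_{i=1}^n|0\cdots01_i0\cdots0\rangle$, $$M^{(s)}_E(|\mathrm{GHZ}_n\rangle)=1-\frac{1}{2^{n-1}},\qquad M^{(s)}_E(|W_n\rangle)=1-\frac{1}{2^{n-1}}\binom{n-1}{\lfloor\frac{n-1}{2}\rfloor}.$$ In particular $M^{(s)}_E(|\mathrm{GHZ}_n\rangle)>M^{(s)}_E(|W_n\rangle)$.
   Context: For $X\subseteq[n]$, $H_X=\sum_{i\in X}H_i$ with eigenvalues $0=\epsilon^X_0\le\epsilon^X_1\le\cdots$. For a state $\rho_X$ with eigenvalues $p_0\ge p_1\ge\cdots$ the passive-state energy is $\mathrm{tr}(\rho_X^pH_X)=\sum_jp_j\epsilon^X_j$. For a pure state $|\psi\rangle$ with marginals $\rho_X=\mathrm{tr}_{X^c}|\psi\rangle\langle\psi|$, $\Delta_{X|X^c}(|\psi\rangle)=\mathrm{tr}(\rho_X^pH_X)+\mathrm{tr}(\rho_{X^c}^pH_{X^c})$, set to $0$ for $X=\emptyset$ or $X=[n]$, and $M^{(s)}_E(|\psi\rangle)=2^{-|s|}\sum_{X\subseteq s}\Delta_{X|X^c}(|\psi\rangle)$. $\lfloor\cdot\rfloor$ is the floor function. *)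

theory Defs
  imports Complex_Main "Jordan_Normal_Form.Char_Poly"
    "HOL-Computational_Algebra.Fundamental_Theorem_Algebra"
begin

(* Conventions.
   n qubits, labelled 0..n-1 (so [n] = {0..<n}).
   A computational basis vector of the n-qubit space is indexed by a
   natural number b < 2^n: qubit i is in state |1> iff  bit b i.
   A (pure) state vector is given by its amplitudes  psi :: nat => complex
   (only the values on {0..<2^n} matter).

   For X = {x_0 < ... < x_(m-1)} the local basis of the subsystem X is
   indexed by k < 2^m, qubit x_j being |1> iff bit k j. *)

definition embed :: "nat set \<Rightarrow> nat \<Rightarrow> nat" where
  "embed X k = (\<Sum>j<card X. if bit k j then 2 ^ (sorted_list_of_set X ! j) else 0)"

(* reduced density matrix rho_X = tr_{X^c} |psi><psi| *)
definition marginal :: "nat \<Rightarrow> (nat \<Rightarrow> complex) \<Rightarrow> nat set \<Rightarrow> complex mat" where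
  "marginal n psi X =
     (let Y = {0..<n} - X in
      mat (2 ^ card X) (2 ^ card X)
        (\<lambda>(k, l). \<Sum>c<2 ^ card Y.
            psi (embed X k + embed Y c) * cnj (psi (embed X l + embed Y c))))"

(* H_X = sum_{i in X} H_i with H_i = |1><1| on qubit i, in the local basis of X *)
definition hamX :: "nat set \<Rightarrow> complex mat" where
  "hamX X = mat (2 ^ card X) (2 ^ card X)
      (\<lambda>(k, l). if k = l then of_nat (card {j. j < card X \<and> bit k j}) else 0)"

(* eigenvalues (with algebraic multiplicity) of a Hermitian matrix, as reals *)
definition eigs :: "complex mat \<Rightarrow> real multiset" where
  "eigs A = image_mset Re (proots (char_poly A))"

(* passive-state energy tr(rho^p H) = sum_j p_j eps_j, p decreasing, eps increasing *)
definition passive_energy :: "complex mat \<Rightarrow> complex mat \<Rightarrow> real" where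
  "passive_energy rho H =
     (let p = rev (sorted_list_of_multiset (eigs rho));
          e = sorted_list_of_multiset (eigs H)
      in \<Sum>j<dim_row rho. p ! j * e ! j)"

definition Delta :: "nat \<Rightarrow> (nat \<Rightarrow> complex) \<Rightarrow> nat set \<Rightarrow> real" where
  "Delta n psi X =
     (if X = {} \<or> X = {0..<n} then 0
      else passive_energy (marginal n psi X) (hamX X)
         + passive_energy (marginal n psi ({0..<n} - X)) (hamX ({0..<n} - X)))"

definition ME :: "nat \<Rightarrow> (nat \<Rightarrow> complex) \<Rightarrow> nat set \<Rightarrow> real" where
  "ME n psi s = (\<Sum>X\<in>Pow s. Delta n psi X) / 2 ^ card s"

definition GHZ :: "nat \<Rightarrow> nat \<Rightarrow> complex" where
  "GHZ n b = (if b = 0 \<or> b = 2 ^ n - 1 then complex_of_real (1 / sqrt 2) else 0)"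

definition Wst :: "nat \<Rightarrow> nat \<Rightarrow> complex" where
  "Wst n b = (if \<exists>i<n. b = 2 ^ i then complex_of_real (1 / sqrt (real n)) else 0)"

end

theory Submission
  imports Defs
begin

unbundle bit_operations_syntax



lemma proots_lin_prod: "proots (\<Prod>a\<leftarrow>xs. [:- a, 1:]) = mset (xs :: complex list)"
proof (induction xs)
  case (Cons a xs)
  have "(\<Prod>a\<leftarrow>xs. [:- a, 1:]) \<noteq> 0" by (auto simp: prod_list_zero_iff)
  moreover have "[:- a, 1:] \<noteq> 0" by simp
  ultimately have "proots ([:- a, 1:] * (\<Prod>a\<leftarrow>xs. [:- a, 1:])) = proots [:- a, 1:] + mset xs"
    using proots_mult[of "[:- a, 1:]" "\<Prod>a\<leftarrow>xs. [:- a, 1:]"] Cons.IH by metis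
  moreover have "proots [:- a, 1:] = {#a#}" using proots_linear_factor[of "-a"] by simp
  ultimately show ?case by simp
qed simp

lemma eigs_upper_tri:
  assumes A: "A \<in> carrier_mat N N" and ut: "upper_triangular A"
  shows "eigs A = mset (map (\<lambda>i. Re (A $$ (i,i))) [0..<N])"
  using A unfolding eigs_def char_poly_upper_triangular[OF A ut] proots_lin_prod diag_mat_def
  by (simp add: multiset.map_comp comp_def)




lemma hamX_carrier: "hamX X \<in> carrier_mat (2 ^ card X) (2 ^ card X)"
  unfolding hamX_def by simp

lemma hamX_ut: "upper_triangular (hamX X)"
  unfolding hamX_def upper_triangular_def by auto

lemma eigs_hamX: "eigs (hamX X) = mset (map (\<lambda>k. real (card {j. j < card X \<and> bit k j})) [0..<2 ^ card X])"
  unfolding eigs_upper_tri[OF hamX_carrier hamX_ut]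
  by (intro arg_cong[where f=mset] map_cong) (auto simp: hamX_def)

lemma nat_bit_lt: "bit (k::nat) j \<Longrightarrow> k < 2 ^ m \<Longrightarrow> j < m"
  by (metis bit_take_bit_iff take_bit_nat_eq_self_iff)

lemma hamX_sorted:
  assumes m: "card X \<ge> 1"
  shows "\<exists>rest. sorted_list_of_multiset (eigs (hamX X)) = 0 # 1 # rest"
proof -
  define m where "m = card X"
  define f where "f = (\<lambda>k::nat. real (card {j. j < m \<and> bit k j}))"
  have m1: "m \<ge> 1" using m m_def by simp
  have "(2::nat) ^ m \<ge> 2 ^ 1" using m1 by (intro power_increasing) auto
  hence "[0..<2 ^ m] = 0 # 1 # [2..<2 ^ m]"
    by (simp add: upt_conv_Cons numeral_2_eq_2)
  hence L: "map f [0..<2 ^ m] = f 0 # f 1 # map f [2..<2 ^ m]" by simp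
  have f0: "f 0 = 0" unfolding f_def by simp
  have "{j. j < m \<and> bit (1::nat) j} = {0}" using m1 by (auto simp: bit_Suc_0_iff)
  hence f1: "f 1 = 1" unfolding f_def by simp
  have fge: "f k \<ge> 1" if "k \<in> set [2..<2 ^ m]" for k
  proof -
    have k: "k \<noteq> 0" "k < 2 ^ m" using that by auto
    then obtain j where j: "bit k j" using bit_eq_iff[of k 0] by auto
    hence "j < m" using k nat_bit_lt by blast
    hence "j \<in> {j. j < m \<and> bit k j}" using j by simp
    hence "card {j. j < m \<and> bit k j} \<noteq> 0" by (metis card_0_eq empty_iff finite_Collect_conjI finite_Collect_less_nat)
    hence c: "1 \<le> card {j. j < m \<and> bit k j}" by linarith
    show ?thesis using c unfolding f_def by (metis of_nat_1 of_nat_le_iff)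
  qed
  have s: "\<forall>x\<in>set (sort (map f [2..<2 ^ m])). 1 \<le> x" using fge by auto
  have "sorted_list_of_multiset (eigs (hamX X)) = sort (map f [0..<2 ^ m])"
    unfolding eigs_hamX f_def m_def by (simp only: sorted_list_of_multiset_mset)
  also have "\<dots> = insort 0 (insort 1 (sort (map f [2..<2 ^ m])))"
    unfolding L f0 f1 by simp
  also have "insort 1 (sort (map f [2..<2 ^ m])) = 1 # sort (map f [2..<2 ^ m])"
    using s by (intro insort_is_Cons) auto
  also have "insort 0 (1 # sort (map f [2..<2 ^ m])) = 0 # 1 # sort (map f [2..<2 ^ m])"
    using s by (intro insort_is_Cons) auto
  finally show ?thesis by blast
qed

lemma mset_two:
  assumes "i1 < N" "i2 < N" "i1 \<noteq> i2" "\<forall>i<N. i \<noteq> i1 \<and> i \<noteq> i2 \<longrightarrow> d i = (0::real)"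
  shows "mset (map d [0..<N]) = add_mset (d i1) (add_mset (d i2) (replicate_mset (N - 2) 0))"
proof -
  define R where "R = {0..<N} - {i1, i2}"
  have "mset_set {0..<N} = mset_set (insert i1 (insert i2 R))"
    using assms by (intro arg_cong[where f=mset_set]) (auto simp: R_def)
  also have "\<dots> = add_mset i1 (add_mset i2 (mset_set R))"
    using assms by (simp add: R_def)
  finally have e: "mset_set {0..<N} = add_mset i1 (add_mset i2 (mset_set R))" .
  have cR: "card R = N - 2" using assms unfolding R_def by (subst card_Diff_subset) auto
  have "image_mset d (mset_set R) = image_mset (\<lambda>_. 0) (mset_set R)"
    using assms by (intro image_mset_cong) (auto simp: R_def)
  also have "\<dots> = replicate_mset (N - 2) 0" using cR by (simp add: image_mset_const_eq)
  finally have "image_mset d (mset_set R) = replicate_mset (N - 2) 0" .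
  thus ?thesis by (simp add: e)
qed

lemma passive_two:
  assumes eig: "eigs rho = mset (map d [0..<N])" and dim: "dim_row rho = N"
    and N: "N = 2 ^ card X" and X: "card X \<ge> 1"
    and i: "i1 < N" "i2 < N" "i1 \<noteq> i2" and dx: "d i1 = x" and dy: "d i2 = y"
    and pos: "x \<ge> 0" "y \<ge> 0" and z: "\<forall>i<N. i \<noteq> i1 \<and> i \<noteq> i2 \<longrightarrow> d i = 0"
  shows "passive_energy rho (hamX X) = min x y"
proof -
  have "(2::nat) ^ card X \<ge> 2 ^ 1" using X by (intro power_increasing) auto
  hence N2: "N \<ge> 2" using N by simp
  have eL: "eigs rho = mset (replicate (N - 2) 0 @ [min x y, max x y])"
    unfolding eig mset_two[OF i z] dx dy by (auto simp: min_def max_def)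
  have sL: "sorted (replicate (N - 2) 0 @ [min x y, max x y])"
    using pos by (auto simp: sorted_append)
  have "sorted_list_of_multiset (eigs rho) = replicate (N - 2) 0 @ [min x y, max x y]"
    unfolding eL sorted_list_of_multiset_mset using sL by (rule sorted_sort_id)
  hence p: "rev (sorted_list_of_multiset (eigs rho)) = [max x y, min x y] @ replicate (N - 2) 0"
    by simp
  obtain rest where e: "sorted_list_of_multiset (eigs (hamX X)) = 0 # 1 # rest"
    using hamX_sorted[OF X] by blast
  define P where "P = [max x y, min x y] @ replicate (N - 2) (0::real)"
  define E where "E = (0::real) # 1 # rest"
  have "passive_energy rho (hamX X) = (\<Sum>j<N. P ! j * E ! j)"
    unfolding passive_energy_def Let_def p e dim P_def E_def ..
  also have "\<dots> = (\<Sum>j\<in>{0,1}. P ! j * E ! j)"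
  proof (rule sum.mono_neutral_right)
    show "\<forall>j\<in>{..<N} - {0, 1}. P ! j * E ! j = 0"
    proof
      fix j assume "j \<in> {..<N} - {0, 1}"
      hence "j \<ge> 2" "j < N" by auto
      hence "P ! j = 0" unfolding P_def by (simp add: nth_append)
      thus "P ! j * E ! j = 0" by simp
    qed
  qed (use N2 in auto)
  also have "\<dots> = min x y" by (simp add: P_def E_def)
  finally show ?thesis .
qed




lemma bit_add_disj:
  assumes "\<And>p. \<not> (bit (a::nat) p \<and> bit b p)"
  shows "bit (a + b) p \<longleftrightarrow> bit a p \<or> bit b p"
proof -
  have "a AND b = 0" using assms by (auto simp: bit_eq_iff bit_and_iff)
  hence "a + b = a OR b" by (rule disjunctive_add_eq_or)
  thus ?thesis by (simp add: bit_or_iff)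
qed

lemma bit_sum_pow: "finite T \<Longrightarrow> bit (\<Sum>i\<in>T. (2::nat)^i) p \<longleftrightarrow> p \<in> T"
proof (induction T arbitrary: p rule: finite_induct)
  case (insert x F)
  have "(\<Sum>i\<in>insert x F. (2::nat)^i) = 2^x + (\<Sum>i\<in>F. 2^i)" using insert by simp
  moreover have "bit (2^x + (\<Sum>i\<in>F. (2::nat)^i)) p \<longleftrightarrow> bit ((2::nat)^x) p \<or> bit (\<Sum>i\<in>F. (2::nat)^i) p"
    by (rule bit_add_disj) (use insert in \<open>auto simp: bit_exp_iff\<close>)
  ultimately show ?case using insert by (auto simp: bit_exp_iff)
qed simp

definition bset :: "nat set \<Rightarrow> nat \<Rightarrow> nat set" where
  "bset X k = (\<lambda>j. sorted_list_of_set X ! j) ` {j. j < card X \<and> bit k j}"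

lemma inj_nth_sorted: "finite X \<Longrightarrow> inj_on (\<lambda>j. sorted_list_of_set X ! j) {..<card X}"
  by (auto simp: inj_on_def nth_eq_iff_index_eq)

lemma image_nth_sorted: "finite X \<Longrightarrow> (\<lambda>j. sorted_list_of_set X ! j) ` {..<card X} = X"
proof -
  assume f: "finite X"
  have "(\<lambda>j. sorted_list_of_set X ! j) ` {..<length (sorted_list_of_set X)} = set (sorted_list_of_set X)"
    by (auto simp: in_set_conv_nth)
  thus ?thesis using f by simp
qed

lemma embed_bset: "finite X \<Longrightarrow> embed X k = (\<Sum>i\<in>bset X k. 2 ^ i)"
proof -
  assume f: "finite X"
  have "embed X k = (\<Sum>j\<in>{j. j < card X \<and> bit k j}. 2 ^ (sorted_list_of_set X ! j))"
    unfolding embed_def by (simp add: sum.If_cases lessThan_def Collect_conj_eq Int_commute)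
  also have "\<dots> = (\<Sum>i\<in>bset X k. 2 ^ i)"
    unfolding bset_def
    by (rule sum.reindex[symmetric, unfolded comp_def]) (rule inj_on_subset[OF inj_nth_sorted[OF f]], auto)
  finally show ?thesis .
qed

lemma bset_sub: "finite X \<Longrightarrow> bset X k \<subseteq> X"
  using image_nth_sorted[of X] unfolding bset_def by auto

lemma bit_embed: "finite X \<Longrightarrow> bit (embed X k) p \<longleftrightarrow> p \<in> bset X k"
  by (simp add: embed_bset bit_sum_pow bset_def)

lemma bit_embed2:
  assumes "finite X" "finite Y" "X \<inter> Y = {}"
  shows "bit (embed X k + embed Y c) p \<longleftrightarrow> p \<in> bset X k \<union> bset Y c"
proof -
  have "bit (embed X k + embed Y c) p \<longleftrightarrow> bit (embed X k) p \<or> bit (embed Y c) p"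
    by (rule bit_add_disj) (use assms bset_sub[of X k] bset_sub[of Y c] in \<open>auto simp: bit_embed\<close>)
  thus ?thesis using assms by (simp add: bit_embed)
qed

lemma bits_inj:
  assumes "(k::nat) < 2 ^ m" "k' < 2 ^ m" "{j. j < m \<and> bit k j} = {j. j < m \<and> bit k' j}"
  shows "k = k'"
proof -
  have "bit k p \<longleftrightarrow> bit k' p" for p
  proof (cases "p < m")
    case True thus ?thesis using assms(3) by blast
  next
    case False thus ?thesis using assms(1,2) nat_bit_lt by blast
  qed
  thus ?thesis by (simp add: bit_eq_iff)
qed

lemma bset_empty_iff:
  assumes "finite X" "k < 2 ^ card X"
  shows "bset X k = {} \<longleftrightarrow> k = 0"
proof -
  have "bset X k = {} \<longleftrightarrow> {j. j < card X \<and> bit k j} = {j. j < card X \<and> bit (0::nat) j}"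
    unfolding bset_def by auto
  also have "\<dots> \<longleftrightarrow> k = 0" using bits_inj[OF assms(2), of 0] by auto
  finally show ?thesis .
qed

lemma bset_full_iff:
  assumes "finite X" "k < 2 ^ card X"
  shows "bset X k = X \<longleftrightarrow> k = 2 ^ card X - 1"
proof -
  let ?f = "\<lambda>j. sorted_list_of_set X ! j"
  have "bset X k = X \<longleftrightarrow> ?f ` {j. j < card X \<and> bit k j} = ?f ` {..<card X}"
    unfolding bset_def image_nth_sorted[OF assms(1)] ..
  also have "\<dots> \<longleftrightarrow> {j. j < card X \<and> bit k j} = {..<card X}"
    by (subst inj_on_image_eq_iff[OF inj_nth_sorted[OF assms(1)]]) auto
  also have "\<dots> \<longleftrightarrow> {j. j < card X \<and> bit k j} = {j. j < card X \<and> bit (2 ^ card X - 1 :: nat) j}"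
  proof -
    have "{j. j < card X \<and> bit (mask (card X) :: nat) j} = {..<card X}"
      by (auto simp add: bit_mask_iff)
    thus ?thesis unfolding mask_eq_exp_minus_1 by simp
  qed
  also have "\<dots> \<longleftrightarrow> k = 2 ^ card X - 1" using bits_inj[OF assms(2), of "2 ^ card X - 1"] by auto
  finally show ?thesis .
qed

lemma bset_single_iff:
  assumes "finite X" "k < 2 ^ card X"
  shows "(\<exists>i. bset X k = {i}) \<longleftrightarrow> (\<exists>j<card X. k = 2 ^ j)"
proof
  assume "\<exists>i. bset X k = {i}"
  then obtain i where i: "bset X k = {i}" by blast
  then obtain j where j: "j < card X" "bit k j" unfolding bset_def by auto
  have "{j'. j' < card X \<and> bit k j'} = {j}"
  proof -
    have "\<And>j'. j' < card X \<Longrightarrow> bit k j' \<Longrightarrow> j' = j"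
    proof -
      fix j' assume "j' < card X" "bit k j'"
      hence "sorted_list_of_set X ! j' = i" "sorted_list_of_set X ! j = i" using i j unfolding bset_def by auto
      thus "j' = j" using inj_nth_sorted[OF assms(1)] \<open>j' < card X\<close> j(1) unfolding inj_on_def by auto
    qed
    thus ?thesis using j by blast
  qed
  also have "\<dots> = {j'. j' < card X \<and> bit ((2::nat) ^ j) j'}" using j(1) by (auto simp: bit_exp_iff)
  finally have "k = 2 ^ j" using bits_inj[OF assms(2), of "2 ^ j"] j(1) by (simp add: power_strict_increasing_iff)
  thus "\<exists>j<card X. k = 2 ^ j" using j by blast
next
  assume "\<exists>j<card X. k = 2 ^ j"
  then obtain j where "j < card X" "k = 2 ^ j" by blast
  hence "{j'. j' < card X \<and> bit k j'} = {j}" by (auto simp: bit_exp_iff)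
  thus "\<exists>i. bset X k = {i}" unfolding bset_def by auto
qed




lemma nat_eq_bits: "(b::nat) = v \<longleftrightarrow> (\<forall>p. bit b p \<longleftrightarrow> bit v p)"
  by (simp add: bit_eq_iff)

lemma bits_full: "bit (2 ^ n - 1 :: nat) p \<longleftrightarrow> p < n"
  unfolding mask_eq_exp_minus_1[symmetric] by (simp add: bit_mask_iff)

lemma union_parts: "A \<subseteq> X \<Longrightarrow> B \<subseteq> Y \<Longrightarrow> X \<inter> Y = {} \<Longrightarrow> (A \<union> B = X \<union> Y) \<longleftrightarrow> (A = X \<and> B = Y)"
  by blast

lemma union_single: "A \<subseteq> X \<Longrightarrow> B \<subseteq> Y \<Longrightarrow> X \<inter> Y = {} \<Longrightarrow>
   (A \<union> B = {i}) \<longleftrightarrow> (A = {i} \<and> B = {}) \<or> (A = {} \<and> B = {i})"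
  by (auto simp: Un_singleton_iff)

locale split =
  fixes n :: nat and X :: "nat set"
  assumes Xsub: "X \<subseteq> {0..<n}"
begin

abbreviation "Y \<equiv> {0..<n} - X"

lemma finX: "finite X" using Xsub finite_subset by blast
lemma finY: "finite Y" by simp
lemma disj: "X \<inter> Y = {}" by auto

lemma bitb: "bit (embed X k + embed Y c) p \<longleftrightarrow> p \<in> bset X k \<union> bset Y c"
  using bit_embed2[OF finX finY disj] .

lemma b_zero:
  assumes "k < 2 ^ card X" "c < 2 ^ card Y"
  shows "embed X k + embed Y c = 0 \<longleftrightarrow> k = 0 \<and> c = 0"
proof -
  have "embed X k + embed Y c = 0 \<longleftrightarrow> bset X k \<union> bset Y c = {}"
    unfolding nat_eq_bits bitb by auto
  also have "\<dots> \<longleftrightarrow> k = 0 \<and> c = 0"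
    using bset_empty_iff[OF finX assms(1)] bset_empty_iff[OF finY assms(2)] by auto
  finally show ?thesis .
qed

lemma b_full:
  assumes "k < 2 ^ card X" "c < 2 ^ card Y"
  shows "embed X k + embed Y c = 2 ^ n - 1 \<longleftrightarrow> k = 2 ^ card X - 1 \<and> c = 2 ^ card Y - 1"
proof -
  have "embed X k + embed Y c = 2 ^ n - 1 \<longleftrightarrow> bset X k \<union> bset Y c = {0..<n}"
    unfolding nat_eq_bits bitb bits_full by (auto simp: set_eq_iff)
  also have "\<dots> \<longleftrightarrow> bset X k \<union> bset Y c = X \<union> Y" using Xsub by (simp add: Un_absorb1)
  also have "\<dots> \<longleftrightarrow> bset X k = X \<and> bset Y c = Y"
    by (rule union_parts[OF bset_sub[OF finX, of k] bset_sub[OF finY, of c] disj])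
  also have "\<dots> \<longleftrightarrow> k = 2 ^ card X - 1 \<and> c = 2 ^ card Y - 1"
    using bset_full_iff[OF finX assms(1)] bset_full_iff[OF finY assms(2)] by auto
  finally show ?thesis .
qed

lemma b_pow:
  assumes "k < 2 ^ card X" "c < 2 ^ card Y"
  shows "(\<exists>i<n. embed X k + embed Y c = 2 ^ i) \<longleftrightarrow>
     ((\<exists>j<card X. k = 2 ^ j) \<and> c = 0) \<or> (k = 0 \<and> (\<exists>j<card Y. c = 2 ^ j))"
proof -
  have "(\<exists>i<n. embed X k + embed Y c = 2 ^ i) \<longleftrightarrow> (\<exists>i<n. bset X k \<union> bset Y c = {i})"
    unfolding nat_eq_bits bitb by (auto simp: bit_exp_iff)
  also have "\<dots> \<longleftrightarrow> (\<exists>i. bset X k \<union> bset Y c = {i})"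
  proof
    assume "\<exists>i. bset X k \<union> bset Y c = {i}"
    then obtain i where i: "bset X k \<union> bset Y c = {i}" by blast
    hence "i \<in> X \<union> Y" using bset_sub[OF finX, of k] bset_sub[OF finY, of c] by blast
    hence "i < n" using Xsub by auto
    thus "\<exists>i<n. bset X k \<union> bset Y c = {i}" using i by blast
  qed blast
  also have "\<dots> \<longleftrightarrow> ((\<exists>i. bset X k = {i}) \<and> bset Y c = {}) \<or> (bset X k = {} \<and> (\<exists>i. bset Y c = {i}))"
  proof -
    have H: "\<And>i. bset X k \<union> bset Y c = {i} \<longleftrightarrow> (bset X k = {i} \<and> bset Y c = {}) \<or> (bset X k = {} \<and> bset Y c = {i})"
      by (rule union_single[OF bset_sub[OF finX, of k] bset_sub[OF finY, of c] disj])
    show ?thesis unfolding H by blast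
  qed
  also have "\<dots> \<longleftrightarrow> ((\<exists>j<card X. k = 2 ^ j) \<and> c = 0) \<or> (k = 0 \<and> (\<exists>j<card Y. c = 2 ^ j))"
    unfolding bset_empty_iff[OF finX assms(1)] bset_empty_iff[OF finY assms(2)]
      bset_single_iff[OF finX assms(1)] bset_single_iff[OF finY assms(2)] ..
  finally show ?thesis .
qed

end




lemma rr2: "complex_of_real (1 / sqrt 2) * cnj (complex_of_real (1 / sqrt 2)) = 1 / 2"
proof -
  have "(1 / sqrt 2) * (1 / sqrt 2) = (1/2::real)" by (simp add: divide_simps)
  hence "complex_of_real (1 / sqrt 2) * complex_of_real (1 / sqrt 2) = complex_of_real (1/2)"
    by (metis of_real_mult)
  thus ?thesis by simp
qed

lemma rrn: "n > 0 \<Longrightarrow> complex_of_real (1 / sqrt (real n)) * cnj (complex_of_real (1 / sqrt (real n))) = 1 / of_nat n"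
proof -
  assume n: "n > 0"
  have "(1 / sqrt (real n)) * (1 / sqrt (real n)) = 1 / real n" using n by (simp add: divide_simps)
  hence "complex_of_real (1 / sqrt (real n)) * complex_of_real (1 / sqrt (real n)) = complex_of_real (1 / real n)"
    by (metis of_real_mult)
  thus ?thesis by simp
qed

lemma card_pows: "card ({..<(2::nat) ^ m} \<inter> {c. \<exists>j<m. c = 2 ^ j}) = m"
proof -
  have "{..<(2::nat) ^ m} \<inter> {c. \<exists>j<m. c = 2 ^ j} = (\<lambda>j. 2 ^ j) ` {..<m}"
    by (auto simp: power_strict_increasing_iff)
  moreover have "inj_on (\<lambda>j. (2::nat) ^ j) {..<m}" by (auto simp: inj_on_def power_inject_exp)
  ultimately show ?thesis by (simp add: card_image)
qed

context split
begin

lemma ghz_entry: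
  assumes "k < 2 ^ card X" "c < 2 ^ card Y"
  shows "GHZ n (embed X k + embed Y c) =
    (if (k = 0 \<and> c = 0) \<or> (k = 2 ^ card X - 1 \<and> c = 2 ^ card Y - 1) then complex_of_real (1 / sqrt 2) else 0)"
  unfolding GHZ_def b_zero[OF assms] b_full[OF assms] ..

lemma w_entry:
  assumes "k < 2 ^ card X" "c < 2 ^ card Y"
  shows "Wst n (embed X k + embed Y c) =
    (if ((\<exists>j<card X. k = 2 ^ j) \<and> c = 0) \<or> (k = 0 \<and> (\<exists>j<card Y. c = 2 ^ j)) then complex_of_real (1 / sqrt (real n)) else 0)"
  unfolding Wst_def b_pow[OF assms] ..

lemma marg_ghz:
  assumes X0: "X \<noteq> {}" and Xn: "X \<noteq> {0..<n}"
  shows "marginal n (GHZ n) X = mat (2 ^ card X) (2 ^ card X)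
     (\<lambda>(k, l). if k = l \<and> (k = 0 \<or> k = 2 ^ card X - 1) then 1 / 2 else 0)"
proof -
  define N where "N = (2::nat) ^ card X"
  define N' where "N' = (2::nat) ^ card Y"
  define r where "r = complex_of_real (1 / sqrt 2)"
  have "card X \<noteq> 0" using X0 finX by simp
  hence "(2::nat) ^ 1 \<le> N" unfolding N_def by (intro power_increasing) auto
  hence N2: "N \<ge> 2" by simp
  have "Y \<noteq> {}"
  proof
    assume "Y = {}"
    hence "{0..<n} \<subseteq> X" by blast
    thus False using Xn Xsub by blast
  qed
  hence "card Y \<noteq> 0" using finY card_0_eq by blast
  hence cY: "1 \<le> card Y" by linarith
  have "(2::nat) ^ 1 \<le> N'" unfolding N'_def by (rule power_increasing[OF cY]) simp
  hence N'2: "N' \<ge> 2" by simp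
  show ?thesis
  proof (rule eq_matI)
    fix i j assume i: "i < dim_row (mat (2 ^ card X) (2 ^ card X)
        (\<lambda>(k, l). if k = l \<and> (k = 0 \<or> k = 2 ^ card X - 1) then 1 / 2 else (0::complex)))"
      and j: "j < dim_col (mat (2 ^ card X) (2 ^ card X)
        (\<lambda>(k, l). if k = l \<and> (k = 0 \<or> k = 2 ^ card X - 1) then 1 / 2 else (0::complex)))"
    have iN: "i < N" and jN: "j < N" using i j N_def by auto
    define f where "f c = GHZ n (embed X i + embed Y c) * cnj (GHZ n (embed X j + embed Y c))" for c
    have fc: "f c = (if (i = 0 \<and> c = 0) \<or> (i = N - 1 \<and> c = N' - 1) then r else 0) *
       cnj (if (j = 0 \<and> c = 0) \<or> (j = N - 1 \<and> c = N' - 1) then r else 0)" if "c < N'" for c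
      unfolding f_def using ghz_entry[of i c] ghz_entry[of j c] iN jN that N_def N'_def r_def by simp
    have "(\<Sum>c<N'. f c) = (\<Sum>c\<in>{0, N' - 1}. f c)"
    proof (rule sum.mono_neutral_right)
      show "\<forall>c\<in>{..<N'} - {0, N' - 1}. f c = 0" using fc by auto
    qed (use N'2 in auto)
    also have "\<dots> = f 0 + f (N' - 1)" using N'2 by simp
    also have "\<dots> = (if i = j \<and> (i = 0 \<or> i = N - 1) then 1 / 2 else 0)"
      using fc[of 0] fc[of "N' - 1"] N'2 N2 rr2 unfolding r_def by auto
    finally have "(\<Sum>c<N'. f c) = (if i = j \<and> (i = 0 \<or> i = N - 1) then 1 / 2 else 0)" .
    thus "marginal n (GHZ n) X $$ (i, j) = mat (2 ^ card X) (2 ^ card X)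
        (\<lambda>(k, l). if k = l \<and> (k = 0 \<or> k = 2 ^ card X - 1) then 1 / 2 else 0) $$ (i, j)"
      unfolding marginal_def Let_def using iN jN unfolding f_def N_def N'_def by simp
  qed (simp_all add: marginal_def Let_def)
qed

lemma marg_w:
  assumes n: "n > 0"
  shows "marginal n (Wst n) X = mat (2 ^ card X) (2 ^ card X)
     (\<lambda>(k, l). (if k = 0 \<and> l = 0 then of_nat (card Y) / of_nat n else 0)
       + (if (\<exists>j<card X. k = 2 ^ j) \<and> (\<exists>j<card X. l = 2 ^ j) then 1 / of_nat n else 0))"
  (is "_ = mat _ _ ?g")
proof -
  define N where "N = (2::nat) ^ card X"
  define N' where "N' = (2::nat) ^ card Y"
  define t where "t = complex_of_real (1 / sqrt (real n))"
  define S' where "S' = {c::nat. \<exists>j<card Y. c = 2 ^ j}"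
  show ?thesis
  proof (rule eq_matI)
    fix i j assume i: "i < dim_row (mat (2 ^ card X) (2 ^ card X) ?g)"
      and j: "j < dim_col (mat (2 ^ card X) (2 ^ card X) ?g)"
    have iN: "i < N" and jN: "j < N" using i j N_def by auto
    define f where "f c = Wst n (embed X i + embed Y c) * cnj (Wst n (embed X j + embed Y c))" for c
    define A where "A = (if (\<exists>j'<card X. i = 2 ^ j') \<and> (\<exists>j'<card X. j = 2 ^ j') then 1 / of_nat n else (0::complex))"
    define B where "B = (if i = 0 \<and> j = 0 then 1 / of_nat n else (0::complex))"
    have fc: "f c = (if c = 0 then A else 0) + (if c \<in> S' then B else 0)" if "c < N'" for c
    proof -
      define pi where "pi = (\<exists>j'<card X. i = 2 ^ j')"
      define pj where "pj = (\<exists>j'<card X. j = 2 ^ j')"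
      define qc where "qc = (c \<in> S')"
      have pi0: "pi \<Longrightarrow> i \<noteq> 0" and pj0: "pj \<Longrightarrow> j \<noteq> 0" and qc0: "qc \<Longrightarrow> c \<noteq> 0"
        unfolding pi_def pj_def qc_def S'_def by auto
      have "f c = (if (pi \<and> c = 0) \<or> (i = 0 \<and> qc) then t else 0) *
        cnj (if (pj \<and> c = 0) \<or> (j = 0 \<and> qc) then t else 0)"
      proof -
        have iX: "i < 2 ^ card X" and jX: "j < 2 ^ card X" and cY: "c < 2 ^ card Y"
          using iN jN that N_def N'_def by auto
        show ?thesis
          unfolding f_def w_entry[OF iX cY] w_entry[OF jX cY] pi_def pj_def qc_def S'_def mem_Collect_eq t_def
          by (rule refl)
      qed
      also have "\<dots> = (if ((pi \<and> c = 0) \<or> (i = 0 \<and> qc)) \<and> ((pj \<and> c = 0) \<or> (j = 0 \<and> qc)) then t * cnj t else 0)"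
        by simp
      also have "t * cnj t = 1 / of_nat n" unfolding t_def by (rule rrn[OF n])
      also have "(if ((pi \<and> c = 0) \<or> (i = 0 \<and> qc)) \<and> ((pj \<and> c = 0) \<or> (j = 0 \<and> qc)) then 1 / of_nat n else 0)
         = (if c = 0 then A else 0) + (if c \<in> S' then B else 0)"
        unfolding A_def B_def pi_def[symmetric] pj_def[symmetric] qc_def[symmetric]
        using pi0 pj0 qc0 by (cases "c = 0"; cases qc; cases "i = 0"; cases "j = 0") auto
      finally show ?thesis .
    qed
    have "(\<Sum>c<N'. f c) = (\<Sum>c<N'. (if c = 0 then A else 0)) + (\<Sum>c<N'. (if c \<in> S' then B else 0))"
      using fc by (simp add: sum.distrib)
    also have "(\<Sum>c<N'. (if c = 0 then A else 0)) = A" unfolding N'_def by simp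
    also have "(\<Sum>c<N'. (if c \<in> S' then B else 0)) = of_nat (card ({..<N'} \<inter> S')) * B"
      by (simp add: sum.If_cases)
    also have "card ({..<N'} \<inter> S') = card Y" unfolding N'_def S'_def by (rule card_pows)
    finally have "(\<Sum>c<N'. f c) = ?g (i, j)" unfolding A_def B_def by auto
    thus "marginal n (Wst n) X $$ (i, j) = mat (2 ^ card X) (2 ^ card X) ?g $$ (i, j)"
      unfolding marginal_def Let_def using iN jN unfolding f_def N_def N'_def by simp
  qed (simp_all add: marginal_def Let_def)
qed

end




lemma sum_if_eq: "(i::nat) < N \<Longrightarrow> (\<Sum>k\<in>{0..<N}. (if i = k then f k else (0::complex))) = f i"
proof -
  assume i: "i < N"
  have "(\<Sum>k\<in>{0..<N}. (if i = k then f k else (0::complex))) = (\<Sum>k\<in>{0..<N}. (if k = i then f k else 0))"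
    by (rule sum.cong) auto
  also have "\<dots> = f i" using i by (simp add: sum.delta)
  finally show ?thesis .
qed

lemma P_left:
  fixes M :: "complex mat"
  assumes M: "M \<in> carrier_mat N N" and S1: "1 < N" and S': "S' \<subseteq> {0..<N}" and S'1: "1 \<notin> S'"
  shows "mat N N (\<lambda>(i,k). (if i = k then 1 else 0) + (if k = 1 \<and> i \<in> S' then c else 0)) * M =
         mat N N (\<lambda>(i,j). M $$ (i,j) + (if i \<in> S' then c * M $$ (1,j) else 0))"
proof (rule eq_matI)
  fix i j assume i: "i < dim_row (mat N N (\<lambda>(i,j). M $$ (i,j) + (if i \<in> S' then c * M $$ (1,j) else 0)))"
    and j: "j < dim_col (mat N N (\<lambda>(i,j). M $$ (i,j) + (if i \<in> S' then c * M $$ (1,j) else 0)))"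
  have iN: "i < N" and jN: "j < N" using i j by auto
  have "(mat N N (\<lambda>(i,k). (if i = k then 1 else 0) + (if k = 1 \<and> i \<in> S' then c else 0)) * M) $$ (i,j)
     = (\<Sum>k\<in>{0..<N}. ((if i = k then 1 else 0) + (if k = 1 \<and> i \<in> S' then c else 0)) * M $$ (k,j))"
    using M iN jN by (simp add: scalar_prod_def)
  also have "\<dots> = (\<Sum>k\<in>{0..<N}. (if i = k then M $$ (k,j) else 0)) + (\<Sum>k\<in>{0..<N}. (if 1 = k then (if i \<in> S' then c * M $$ (k,j) else 0) else 0))"
    by (subst sum.distrib[symmetric]) (rule sum.cong, use S'1 in auto)
  also have "\<dots> = M $$ (i,j) + (if i \<in> S' then c * M $$ (1,j) else 0)"
    using iN S1 by (simp only: sum_if_eq)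
  finally show "(mat N N (\<lambda>(i,k). (if i = k then 1 else 0) + (if k = 1 \<and> i \<in> S' then c else 0)) * M) $$ (i,j) =
     mat N N (\<lambda>(i,j). M $$ (i,j) + (if i \<in> S' then c * M $$ (1,j) else 0)) $$ (i,j)"
    using iN jN by simp
qed (use M in auto)

lemma P_right:
  fixes M :: "complex mat"
  assumes M: "M \<in> carrier_mat N N" and S1: "1 < N" and S': "S' \<subseteq> {0..<N}" and S'1: "1 \<notin> S'"
  shows "M * mat N N (\<lambda>(i,k). (if i = k then 1 else 0) + (if k = 1 \<and> i \<in> S' then 1 else 0)) =
         mat N N (\<lambda>(i,j). M $$ (i,j) + (if j = 1 then (\<Sum>k\<in>S'. M $$ (i,k)) else 0))"
proof (rule eq_matI)
  fix i j assume i: "i < dim_row (mat N N (\<lambda>(i,j). M $$ (i,j) + (if j = 1 then (\<Sum>k\<in>S'. M $$ (i,k)) else 0)))"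
    and j: "j < dim_col (mat N N (\<lambda>(i,j). M $$ (i,j) + (if j = 1 then (\<Sum>k\<in>S'. M $$ (i,k)) else 0)))"
  have iN: "i < N" and jN: "j < N" using i j by auto
  have "(M * mat N N (\<lambda>(i,k). (if i = k then 1 else 0) + (if k = 1 \<and> i \<in> S' then 1 else 0))) $$ (i,j)
     = (\<Sum>k\<in>{0..<N}. M $$ (i,k) * ((if k = j then 1 else 0) + (if j = 1 \<and> k \<in> S' then 1 else 0)))"
    using M iN jN by (simp add: scalar_prod_def)
  also have "\<dots> = (\<Sum>k\<in>{0..<N}. (if j = k then M $$ (i,k) else 0)) + (\<Sum>k\<in>{0..<N}. (if j = 1 \<and> k \<in> S' then M $$ (i,k) else 0))"
    by (subst sum.distrib[symmetric]) (rule sum.cong, use S'1 in auto)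
  also have "(\<Sum>k\<in>{0..<N}. (if j = 1 \<and> k \<in> S' then M $$ (i,k) else 0)) = (if j = 1 then (\<Sum>k\<in>{0..<N}. (if k \<in> S' then M $$ (i,k) else 0)) else 0)"
    by auto
  also have "(\<Sum>k\<in>{0..<N}. (if k \<in> S' then M $$ (i,k) else 0)) = (\<Sum>k\<in>S'. M $$ (i,k))"
    using S' by (simp add: sum.If_cases Int_absorb1)
  also have "(\<Sum>k\<in>{0..<N}. (if j = k then M $$ (i,k) else 0)) = M $$ (i,j)"
    using jN by (rule sum_if_eq)
  finally show "(M * mat N N (\<lambda>(i,k). (if i = k then 1 else 0) + (if k = 1 \<and> i \<in> S' then 1 else 0))) $$ (i,j) =
     mat N N (\<lambda>(i,j). M $$ (i,j) + (if j = 1 then (\<Sum>k\<in>S'. M $$ (i,k)) else 0)) $$ (i,j)"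
    using iN jN by simp
qed (use M in auto)




lemma tri_eigs:
  fixes a b :: complex
  assumes S: "S \<subseteq> {1..<N}" "1 \<in> S"
  shows "eigs (mat N N (\<lambda>(k,l). (if k = 0 \<and> l = 0 then a else 0) + (if k \<in> S \<and> l \<in> S then b else 0)))
     = mset (map (\<lambda>i. Re (if i = 0 then a else if i = 1 then of_nat (card S) * b else 0)) [0..<N])"
proof -
  define A where "A = mat N N (\<lambda>(k,l). (if k = 0 \<and> l = 0 then a else 0) + (if k \<in> S \<and> l \<in> S then b else 0))"
  define S' where "S' = S - {1}"
  have N1: "1 < N" using S by auto
  have S'sub: "S' \<subseteq> {0..<N}" using S unfolding S'_def by auto
  have S'1: "1 \<notin> S'" unfolding S'_def by auto
  have S'0: "0 \<notin> S'" "0 \<notin> S" using S unfolding S'_def by auto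
  have finS: "finite S" using S finite_subset by blast
  have cS: "card S = card S' + 1"
  proof -
    have "card S > 0" using finS S(2) card_gt_0_iff by blast
    moreover have "card S' = card S - 1" unfolding S'_def using card_Diff_singleton[OF S(2)] .
    ultimately show ?thesis by linarith
  qed
  define P where "P = mat N N (\<lambda>(i,k). (if i = k then 1 else 0) + (if k = 1 \<and> i \<in> S' then (1::complex) else 0))"
  define Q where "Q = mat N N (\<lambda>(i,k). (if i = k then 1 else 0) + (if k = 1 \<and> i \<in> S' then (-1::complex) else 0))"
  define B where "B = mat N N (\<lambda>(i,j). (if i = 0 \<and> j = 0 then a else 0) + (if i = 1 \<and> j \<in> S then b else 0)
      + (if i = 1 \<and> j = 1 then of_nat (card S') * b else 0))"
  have cA: "A \<in> carrier_mat N N" and cP: "P \<in> carrier_mat N N" and cQ: "Q \<in> carrier_mat N N"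
    and cB: "B \<in> carrier_mat N N" unfolding A_def P_def Q_def B_def by auto
  have PQ: "P * Q = 1\<^sub>m N"
    unfolding P_def P_left[OF cQ N1 S'sub S'1]
  proof (rule eq_matI)
    fix i j assume "i < dim_row (1\<^sub>m N :: complex mat)" "j < dim_col (1\<^sub>m N :: complex mat)"
    hence i: "i < N" and j: "j < N" by auto
    have Qij: "Q $$ (i,j) = (if i = j then 1 else 0) + (if j = 1 \<and> i \<in> S' then -1 else 0)"
      unfolding Q_def using i j by simp
    have Q1j: "Q $$ (1,j) = (if 1 = j then 1 else 0)" unfolding Q_def using N1 j S'1 by simp
    show "mat N N (\<lambda>(i, j). Q $$ (i, j) + (if i \<in> S' then 1 * Q $$ (1, j) else 0)) $$ (i, j) = 1\<^sub>m N $$ (i, j)"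
      using i j S'1 unfolding index_mat(1)[OF i j] split Qij Q1j by auto
  qed auto
  have QP: "Q * P = 1\<^sub>m N"
    unfolding Q_def P_left[OF cP N1 S'sub S'1]
  proof (rule eq_matI)
    fix i j assume "i < dim_row (1\<^sub>m N :: complex mat)" "j < dim_col (1\<^sub>m N :: complex mat)"
    hence i: "i < N" and j: "j < N" by auto
    have Pij: "P $$ (i,j) = (if i = j then 1 else 0) + (if j = 1 \<and> i \<in> S' then 1 else 0)"
      unfolding P_def using i j by simp
    have P1j: "P $$ (1,j) = (if 1 = j then 1 else 0)" unfolding P_def using N1 j S'1 by simp
    show "mat N N (\<lambda>(i, j). P $$ (i, j) + (if i \<in> S' then - 1 * P $$ (1, j) else 0)) $$ (i, j) = 1\<^sub>m N $$ (i, j)"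
      using i j S'1 unfolding index_mat(1)[OF i j] split Pij P1j by auto
  qed auto
  have sumA: "(\<Sum>k\<in>S'. A $$ (i,k)) = of_nat (card S') * (if i \<in> S then b else 0)" if "i < N" for i
  proof -
    have "(\<Sum>k\<in>S'. A $$ (i,k)) = (\<Sum>k\<in>S'. (if i \<in> S then b else 0))"
    proof (rule sum.cong)
      fix k assume k: "k \<in> S'"
      hence "k < N" "k \<noteq> 0" "k \<in> S" using S'sub S'0 unfolding S'_def by auto
      thus "A $$ (i,k) = (if i \<in> S then b else 0)" using that unfolding A_def by simp
    qed simp
    thus ?thesis by simp
  qed
  have AP: "A * P = P * B"
    unfolding P_def P_right[OF cA N1 S'sub S'1] P_left[OF cB N1 S'sub S'1]
  proof (rule eq_matI)
    fix i j assume "i < dim_row (mat N N (\<lambda>(i, j). B $$ (i, j) + (if i \<in> S' then 1 * B $$ (1, j) else 0)))"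
      "j < dim_col (mat N N (\<lambda>(i, j). B $$ (i, j) + (if i \<in> S' then 1 * B $$ (1, j) else 0)))"
    hence i: "i < N" and j: "j < N" by auto
    show "mat N N (\<lambda>(i, j). A $$ (i, j) + (if j = 1 then \<Sum>k\<in>S'. A $$ (i, k) else 0)) $$ (i, j) =
          mat N N (\<lambda>(i, j). B $$ (i, j) + (if i \<in> S' then 1 * B $$ (1, j) else 0)) $$ (i, j)"
    proof -
      have Aij: "A $$ (i,j) = (if i = 0 \<and> j = 0 then a else 0) + (if i \<in> S \<and> j \<in> S then b else 0)"
        unfolding A_def using i j by simp
      have Bij: "B $$ (i,j) = (if i = 0 \<and> j = 0 then a else 0) + (if i = 1 \<and> j \<in> S then b else 0)
      + (if i = 1 \<and> j = 1 then of_nat (card S') * b else 0)"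
        unfolding B_def using i j by simp
      have B1j: "B $$ (1,j) = (if j \<in> S then b else 0) + (if j = 1 then of_nat (card S') * b else 0)"
        unfolding B_def using N1 j by simp
      have iS: "i \<in> S \<longleftrightarrow> i = 1 \<or> i \<in> S'" unfolding S'_def using S(2) by auto
      show ?thesis
        unfolding index_mat(1)[OF i j] split sumA[OF i] Aij Bij B1j
        using S'0 S'1 S(2) iS by (cases "i = 1"; cases "i \<in> S'"; cases "j = 1"; cases "j \<in> S"; cases "i = 0"; cases "j = 0") (auto simp: algebra_simps)
    qed
  qed auto
  have "A = A * 1\<^sub>m N" using cA by simp
  also have "\<dots> = A * (P * Q)" unfolding PQ ..
  also have "\<dots> = (A * P) * Q" using cA cP cQ by (simp add: assoc_mult_mat)
  also have "\<dots> = P * B * Q" unfolding AP ..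
  finally have APBQ: "A = P * B * Q" .
  have "similar_mat A B"
    unfolding similar_mat_def similar_mat_wit_def Let_def
    using cA cP cQ cB PQ QP APBQ by (intro exI[of _ P] exI[of _ Q]) auto
  hence "eigs A = eigs B" unfolding eigs_def by (simp add: char_poly_similar)
  also have "upper_triangular B" unfolding upper_triangular_def B_def using S by auto
  hence "eigs B = mset (map (\<lambda>i. Re (B $$ (i,i))) [0..<N])" using eigs_upper_tri[OF cB] by simp
  also have "\<dots> = mset (map (\<lambda>i. Re (if i = 0 then a else if i = 1 then of_nat (card S) * b else 0)) [0..<N])"
    by (intro arg_cong[where f=mset] map_cong) (use S'0 S(2) S'1 in \<open>auto simp: B_def cS algebra_simps\<close>)
  finally show ?thesis unfolding A_def .
qed




lemma binom_min:
  "(\<Sum>k=0..Suc N. (Suc N choose k) * min k (Suc N - k)) + Suc N * (N choose (N div 2)) = Suc N * 2 ^ N"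
proof -
  define G1 where "G1 k = (if 2 * k \<le> Suc N then (Suc N choose k) * k else 0)" for k
  define G2 where "G2 k = (if 2 * k > Suc N then (Suc N choose k) * (Suc N - k) else 0)" for k
  define A where "A = (\<Sum>j=0..N. if 2 * j < N then N choose j else 0)"
  define B where "B = (\<Sum>j=0..N. if 2 * j > Suc N then N choose j else 0)"
  define C where "C = (\<Sum>j=0..N. if j = Suc N div 2 then N choose j else 0)"
  have split: "(Suc N choose k) * min k (Suc N - k) = G1 k + G2 k" for k
    unfolding G1_def G2_def by (auto simp: min_def)
  have s1: "(\<Sum>k=0..Suc N. G1 k) = Suc N * A"
  proof -
    have "(\<Sum>k=0..Suc N. G1 k) = G1 0 + (\<Sum>j=0..N. G1 (Suc j))"
      using sum.atLeast0_atMost_Suc_shift[of G1 N] by (simp add: comp_def)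
    also have "G1 0 = 0" unfolding G1_def by simp
    also have "(\<Sum>j=0..N. G1 (Suc j)) = (\<Sum>j=0..N. Suc N * (if 2 * j < N then N choose j else 0))"
    proof (rule sum.cong)
      fix j assume "j \<in> {0..N}"
      have "(Suc N choose Suc j) * Suc j = Suc N * (N choose j)"
        using Suc_times_binomial[of j N] by (simp add: mult.commute)
      thus "G1 (Suc j) = Suc N * (if 2 * j < N then N choose j else 0)"
        unfolding G1_def by auto
    qed simp
    finally show ?thesis unfolding A_def by (simp add: sum_distrib_left)
  qed
  have s2: "(\<Sum>k=0..Suc N. G2 k) = Suc N * B"
  proof -
    have "(\<Sum>k=0..Suc N. G2 k) = (\<Sum>k=0..N. G2 k) + G2 (Suc N)"
      by (rule sum.atLeast0_atMost_Suc)
    also have "G2 (Suc N) = 0" unfolding G2_def by simp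
    also have "(\<Sum>k=0..N. G2 k) = (\<Sum>k=0..N. Suc N * (if 2 * k > Suc N then N choose k else 0))"
    proof (rule sum.cong)
      fix k assume "k \<in> {0..N}"
      have "(Suc N - k) * (Suc N choose k) = Suc N * (N choose k)"
        using binomial_absorb_comp[of "Suc N" k] by simp
      thus "G2 k = Suc N * (if 2 * k > Suc N then N choose k else 0)"
        unfolding G2_def by (auto simp: mult.commute)
    qed simp
    finally show ?thesis unfolding B_def by (simp add: sum_distrib_left)
  qed
  have row: "A + B + C = 2 ^ N"
  proof -
    have "A + B + C = (\<Sum>j=0..N. N choose j)"
      unfolding A_def B_def C_def sum.distrib[symmetric]
      by (rule sum.cong) auto
    also have "\<dots> = 2 ^ N" using choose_row_sum[of N] by (simp add: atLeast0AtMost)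
    finally show ?thesis .
  qed
  have Cv: "C = N choose (N div 2)"
  proof -
    have le: "Suc N div 2 \<le> N" by simp
    have "C = N choose (Suc N div 2)" unfolding C_def using le by (simp add: sum.delta)
    also have "\<dots> = N choose (N - Suc N div 2)" using le by (rule binomial_symmetric)
    also have "N - Suc N div 2 = N div 2" by simp
    finally show ?thesis .
  qed
  have "(\<Sum>k=0..Suc N. (Suc N choose k) * min k (Suc N - k)) = Suc N * A + Suc N * B"
    unfolding split sum.distrib s1 s2 ..
  thus ?thesis using row Cv by (metis add_mult_distrib2)
qed




context split
begin

lemma cardX1: "X \<noteq> {} \<Longrightarrow> card X \<ge> 1"
  using finX by (simp add: Suc_le_eq card_gt_0_iff)

lemma pe_ghz:
  assumes X0: "X \<noteq> {}" and Xn: "X \<noteq> {0..<n}"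
  shows "passive_energy (marginal n (GHZ n) X) (hamX X) = 1 / 2"
proof -
  define N where "N = (2::nat) ^ card X"
  have c1: "card X \<ge> 1" using cardX1 X0 by blast
  have "(2::nat) ^ 1 \<le> N" unfolding N_def by (rule power_increasing[OF c1]) simp
  hence N2: "N \<ge> 2" by simp
  define D where "D = mat N N (\<lambda>(k, l). if k = l \<and> (k = 0 \<or> k = N - 1) then 1 / 2 else (0::complex))"
  have M: "marginal n (GHZ n) X = D" unfolding D_def N_def by (rule marg_ghz[OF X0 Xn])
  have cD: "D \<in> carrier_mat N N" unfolding D_def by simp
  have uD: "upper_triangular D" unfolding D_def upper_triangular_def by auto
  have e: "eigs D = mset (map (\<lambda>i. Re (D $$ (i,i))) [0..<N])" by (rule eigs_upper_tri[OF cD uD])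
  have "passive_energy D (hamX X) = min (1/2) (1/2)"
  proof (rule passive_two[OF e])
    show "dim_row D = N" unfolding D_def by simp
    show "N = 2 ^ card X" unfolding N_def ..
    show "1 \<le> card X" by (rule c1)
    show "0 < N" "N - 1 < N" "0 \<noteq> N - 1" using N2 by auto
    show "Re (D $$ (0, 0)) = 1 / 2" "Re (D $$ (N - 1, N - 1)) = 1 / 2" unfolding D_def using N2 by auto
    show "\<forall>i<N. i \<noteq> 0 \<and> i \<noteq> N - 1 \<longrightarrow> Re (D $$ (i, i)) = 0" unfolding D_def by auto
  qed auto
  thus ?thesis unfolding M by simp
qed

lemma pe_w:
  assumes n: "n > 0" and X0: "X \<noteq> {}"
  shows "passive_energy (marginal n (Wst n) X) (hamX X) = min (card Y / n) (card X / n)"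
proof -
  define N where "N = (2::nat) ^ card X"
  define S where "S = {k::nat. \<exists>j<card X. k = 2 ^ j}"
  have c1: "card X \<ge> 1" using cardX1 X0 by blast
  have Ssub: "S \<subseteq> {1..<N}" unfolding S_def N_def by (auto simp: power_strict_increasing_iff)
  have S1: "1 \<in> S" unfolding S_def using c1 by (auto intro!: exI[of _ 0])
  have cS: "card S = card X"
  proof -
    have "{..<N} \<inter> S = S" using Ssub by auto
    thus ?thesis using card_pows[of "card X"] unfolding S_def N_def by simp
  qed
  have M: "marginal n (Wst n) X = mat N N (\<lambda>(k,l). (if k = 0 \<and> l = 0 then of_nat (card Y) / of_nat n else 0)
      + (if k \<in> S \<and> l \<in> S then 1 / of_nat n else 0))"
    unfolding marg_w[OF n] N_def S_def mem_Collect_eq ..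
  have e: "eigs (marginal n (Wst n) X) = mset (map (\<lambda>i. Re (if i = 0 then of_nat (card Y) / of_nat n
      else if i = 1 then of_nat (card S) * (1 / of_nat n) else 0)) [0..<N])"
    unfolding M by (rule tri_eigs[OF Ssub S1])
  show ?thesis
  proof (rule passive_two[OF e])
    show "dim_row (marginal n (Wst n) X) = N" unfolding M by simp
    show "N = 2 ^ card X" unfolding N_def ..
    show "1 \<le> card X" by (rule c1)
    show "0 < N" "1 < N" using Ssub S1 by auto
    show "Re (if (0::nat) = 0 then complex_of_nat (card Y) / complex_of_nat n
        else if (0::nat) = 1 then complex_of_nat (card S) * (1 / complex_of_nat n) else 0) = card Y / n"
      by simp
    show "Re (if (1::nat) = 0 then complex_of_nat (card Y) / complex_of_nat n
        else if (1::nat) = 1 then complex_of_nat (card S) * (1 / complex_of_nat n) else 0) = card X / n"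
      unfolding cS by simp
  qed auto
qed

end

lemma split_compl: "X \<subseteq> {0..<n} \<Longrightarrow> split n ({0..<n} - X)"
  by (unfold_locales) auto

lemma delta_ghz:
  assumes X: "X \<subseteq> {0..<n}"
  shows "Delta n (GHZ n) X = (if X = {} \<or> X = {0..<n} then 0 else 1)"
proof (cases "X = {} \<or> X = {0..<n}")
  case True thus ?thesis unfolding Delta_def by auto
next
  case False
  interpret s1: split n X by unfold_locales (rule X)
  interpret s2: split n "{0..<n} - X" by (rule split_compl[OF X])
  have a: "{0..<n} - X \<noteq> {}" using False X by blast
  have b: "{0..<n} - X \<noteq> {0..<n}" using False X by blast
  show ?thesis unfolding Delta_def using False s1.pe_ghz s2.pe_ghz[OF a b] by auto
qed

lemma delta_w:
  assumes X: "X \<subseteq> {0..<n}" and n: "n > 0"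
  shows "Delta n (Wst n) X = 2 * min (card X) (n - card X) / n"
proof -
  have fX: "finite X" using X finite_subset by blast
  have cY: "card ({0..<n} - X) = n - card X" using X fX by (simp add: card_Diff_subset)
  show ?thesis
  proof (cases "X = {} \<or> X = {0..<n}")
    case True thus ?thesis unfolding Delta_def by auto
  next
    case False
    interpret s1: split n X by unfold_locales (rule X)
    interpret s2: split n "{0..<n} - X" by (rule split_compl[OF X])
    have a: "{0..<n} - X \<noteq> {}" using False X by blast
    have dd: "{0..<n} - ({0..<n} - X) = X" using X by blast
    have "Delta n (Wst n) X = min (real (n - card X) / n) (card X / n) + min (card X / n) (real (n - card X) / n)"
      unfolding Delta_def using False s1.pe_w[OF n] s2.pe_w[OF n a] unfolding dd cY by simp
    also have "\<dots> = 2 * min (card X) (n - card X) / n" using n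
      by (simp add: min_def divide_simps)
    finally show ?thesis .
  qed
qed




lemma sum_Pow_card:
  assumes fA: "finite A"
  shows "(\<Sum>X\<in>Pow A. g (card X)) = (\<Sum>k=0..card A. real (card A choose k) * g k)"
proof -
  have "(\<Sum>X\<in>Pow A. g (card X)) = (\<Sum>k\<in>{0..card A}. \<Sum>X\<in>{X. X \<in> Pow A \<and> card X = k}. g (card X))"
    by (rule sum.group[symmetric]) (use fA in \<open>auto simp: card_mono\<close>)
  also have "\<dots> = (\<Sum>k=0..card A. real (card A choose k) * g k)"
  proof (rule sum.cong)
    fix k assume "k \<in> {0..card A}"
    have "(\<Sum>X\<in>{X. X \<in> Pow A \<and> card X = k}. g (card X)) = (\<Sum>X\<in>{X. X \<subseteq> A \<and> card X = k}. g k)"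
      by (rule sum.cong) auto
    also have "\<dots> = real (card A choose k) * g k" using n_subsets[OF fA, of k] by simp
    finally show "(\<Sum>X\<in>{X. X \<in> Pow A \<and> card X = k}. g (card X)) = real (card A choose k) * g k" .
  qed simp
  finally show ?thesis .
qed

lemma ME_ghz:
  assumes n: "n \<ge> 1"
  shows "ME n (GHZ n) {0..<n} = 1 - 1 / 2 ^ (n - 1)"
proof -
  let ?A = "{0..<n}"
  have ne: "{} \<noteq> ?A" using n by auto
  have "(\<Sum>X\<in>Pow ?A. Delta n (GHZ n) X) = (\<Sum>X\<in>Pow ?A. 1 - (if X = {} then 1 else 0) - (if X = ?A then 1 else 0))"
  proof (rule sum.cong)
    fix X assume "X \<in> Pow ?A"
    thus "Delta n (GHZ n) X = 1 - (if X = {} then 1 else 0) - (if X = ?A then 1 else 0)"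
      using delta_ghz[of X n] ne by auto
  qed simp
  also have "\<dots> = real (card (Pow ?A)) - 1 - 1"
    by (simp add: sum_subtractf sum.delta)
  also have "card (Pow ?A) = 2 ^ n" by (simp add: card_Pow)
  finally have s: "(\<Sum>X\<in>Pow ?A. Delta n (GHZ n) X) = 2 ^ n - 2" by simp
  obtain N where N: "n = Suc N" using n by (cases n) auto
  have c1: "card ?A = Suc N" using N by simp
  have c2: "n - 1 = N" using N by simp
  have "(2 ^ Suc N - 2) / 2 ^ Suc N = (2 * (2 ^ N - 1)) / (2 * (2::real) ^ N)"
    by (simp add: algebra_simps)
  also have "\<dots> = (2 ^ N - 1) / (2::real) ^ N" by (rule mult_divide_mult_cancel_left) simp
  also have "\<dots> = 1 - 1 / 2 ^ N" by (simp add: diff_divide_distrib)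
  finally have "(2 ^ Suc N - 2) / 2 ^ Suc N = 1 - 1 / (2::real) ^ N" .
  hence "(2 ^ n - 2) / 2 ^ n = 1 - 1 / (2::real) ^ (n - 1)" unfolding c2 unfolding N .
  thus ?thesis unfolding ME_def s card_atLeastLessThan diff_zero .
qed

lemma ME_w:
  assumes n: "n \<ge> 1"
  shows "ME n (Wst n) {0..<n} = 1 - real ((n - 1) choose ((n - 1) div 2)) / 2 ^ (n - 1)"
proof -
  let ?A = "{0..<n}"
  obtain N where N: "n = Suc N" using n by (cases n) auto
  have "(\<Sum>X\<in>Pow ?A. Delta n (Wst n) X) = (\<Sum>X\<in>Pow ?A. 2 * min (card X) (n - card X) / n)"
    by (rule sum.cong) (use delta_w n in auto)
  also have "\<dots> = (\<Sum>k=0..n. real (n choose k) * (2 * min k (n - k) / n))"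
    using sum_Pow_card[of ?A "\<lambda>k. 2 * min k (n - k) / n"] by simp
  also have "\<dots> = (\<Sum>k=0..n. 2 / n * real ((n choose k) * min k (n - k)))"
    by (rule sum.cong) auto
  also have "\<dots> = 2 / n * real (\<Sum>k=0..n. (n choose k) * min k (n - k))"
    by (simp only: sum_distrib_left of_nat_sum)
  also have "real (\<Sum>k=0..n. (n choose k) * min k (n - k)) = n * 2 ^ N - n * real (N choose (N div 2))"
    using arg_cong[OF binom_min[of N], of real] unfolding N by (simp add: algebra_simps)
  finally have s0: "(\<Sum>X\<in>Pow ?A. Delta n (Wst n) X) = 2 / n * (n * 2 ^ N - n * real (N choose (N div 2)))" .
  have nr: "real n \<noteq> 0" using n by simp
  have s: "(\<Sum>X\<in>Pow ?A. Delta n (Wst n) X) = 2 * (2 ^ N - real (N choose (N div 2)))"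
    unfolding s0 using nr by (simp add: field_simps)
  have c1: "card ?A = Suc N" using N by simp
  have c2: "n - 1 = N" using N by simp
  define C where "C = real (N choose (N div 2))"
  have "2 * (2 ^ N - C) / 2 ^ Suc N = (2 ^ N - C) / (2::real) ^ N"
    unfolding power_Suc by (rule mult_divide_mult_cancel_left) simp
  also have "\<dots> = 1 - C / 2 ^ N" by (simp add: diff_divide_distrib)
  finally have "2 * (2 ^ N - C) / 2 ^ Suc N = 1 - C / (2::real) ^ N" .
  thus ?thesis unfolding ME_def s c1 c2 C_def .
qed

lemma choose_gt1:
  assumes "N \<ge> 2"
  shows "(N choose (N div 2)) > 1"
proof -
  have k1: "N div 2 \<ge> 1" "N div 2 < N" using assms by auto
  have "N choose (N div 2) = (N - 1 choose (N div 2 - 1)) + (N - 1 choose (N div 2))"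
    using choose_reduce_nat[of N "N div 2"] k1 by auto
  moreover have "(N - 1 choose (N div 2 - 1)) > 0" "(N - 1 choose (N div 2)) > 0"
    using k1 by (auto intro!: zero_less_binomial)
  ultimately show ?thesis by linarith
qed

theorem mainTheorem7:
  fixes n :: nat
  assumes "n \<ge> 3"
  shows "ME n (GHZ n) {0..<n} = 1 - 1 / 2 ^ (n - 1)
    \<and> ME n (Wst n) {0..<n} = 1 - real ((n - 1) choose nat \<lfloor>real (n - 1) / 2\<rfloor>) / 2 ^ (n - 1)
    \<and> ME n (GHZ n) {0..<n} > ME n (Wst n) {0..<n}"
proof -
  have n1: "n \<ge> 1" using assms by simp
  have fl: "nat \<lfloor>real (n - 1) / 2\<rfloor> = (n - 1) div 2"
  proof -
    have "\<lfloor>real (n - 1) / real (2::nat)\<rfloor> = int ((n - 1) div 2)" by (rule floor_divide_of_nat_eq)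
    thus ?thesis by simp
  qed
  have g: "ME n (GHZ n) {0..<n} = 1 - 1 / 2 ^ (n - 1)" by (rule ME_ghz[OF n1])
  have w: "ME n (Wst n) {0..<n} = 1 - real ((n - 1) choose ((n - 1) div 2)) / 2 ^ (n - 1)" by (rule ME_w[OF n1])
  have c: "real ((n - 1) choose ((n - 1) div 2)) > 1" using choose_gt1[of "n - 1"] assms by simp
  have "1 / (2::real) ^ (n - 1) < real ((n - 1) choose ((n - 1) div 2)) / 2 ^ (n - 1)"
    using c by (simp add: divide_strict_right_mono)
  thus ?thesis unfolding fl using g w by simp
qed



end
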